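(* Let $a>0$ and let $\mathcal{Q}$ be the Brownian fan kernel $$\mathcal{Q}(w,\cdot)=\frac a2\int_{\mathfrak{s}(w)}^{\mathfrak{e}(w)}\Theta_{w,\tau}^\star\mathbf{Q}\,d\tau,\qquad w\in\mathcal{E}.$$ For $\eta>0$ define $F(w)=e^{-\eta\mathfrak{s}(w)}\bigl(1-e^{-\eta|\mathfrak{l}(w)|}\bigr)$, where $|\mathfrak{l}(w)|=\mathfrak{e}(w)-\mathfrak{s}(w)$. Then, provided $\eta$ is large enough, there exists $c<1$ such that $\int_{\mathcal{E}}F(\tilde w)\,\mathcal{Q}(w,d\tilde w)\le cF(w)$ for every $w\in\mathcal{E}$.
   Context: An excursion is a triple $w=(s,t,y)$ with $s\in\mathbb{R}$, $t\in\mathbb{R}\cup\{+\infty\}$, $s<t$, and $y\in C(\mathbb{R},\mathbb{R})$ with $y_\tau=y_t$ for $\tau\ge t$ and $y_\tau=y_s$ for $\tau\le s$; write $\mathfrak{s}(w)=s$, $\mathfrak{e}(w)=t$, $\mathfrak{l}(w)=[s,t]$, $w_\tau=y_\tau$, and $\mathcal{E}$ for the set of excursions. $\mathbf{Q}$ is Itô's Brownian excursion measure, viewed as a $\sigma$-finite measure on excursions with $\mathfrak{s}=0$ starting from $0$, normalised so that $\mathbf{Q}=\lim_{\varepsilon\to0}\varepsilon^{-1}\mathbf{Q}_\varepsilon$ with $\mathbf{Q}_\varepsilon$ the law of a standard Brownian motion started at $\varepsilon$ and killed when hitting $0$; under $\mathbf{Q}$ the lifetime $\mathfrak{e}(w)$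 has density $s^{-3/2}/\sqrt{2\pi}$ on $(0,\infty)$. For $w\in\mathcal{E}$ and $\tau\in\mathbb{R}$, $\Theta_{w,\tau}$ is the map on excursions which translates an excursion in time and space so that its starting point (time $0$, position $0$) is moved to the point (time $\tau$, position $w_\tau$). *)

theory Defs
  imports "HOL-Analysis.Analysis"
begin

type_synonym excursion = "real \<times> ereal \<times> (real \<Rightarrow> real)"

definition exc_start :: "excursion \<Rightarrow> real" where
  "exc_start w = fst w"

definition exc_end :: "excursion \<Rightarrow> ereal" where
  "exc_end w = fst (snd w)"

definition exc_path :: "excursion \<Rightarrow> real \<Rightarrow> real" where
  "exc_path w = snd (snd w)"

definition is_excursion :: "excursion \<Rightarrow> bool" where
  "is_excursion w \<longleftrightarrow>
     ereal (exc_start w) < exc_end w \<and>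
     continuous_on UNIV (exc_path w) \<and>
     (\<forall>\<tau>. exc_end w \<le> ereal \<tau> \<longrightarrow> exc_path w \<tau> = exc_path w (real_of_ereal (exc_end w))) \<and>
     (\<forall>\<tau>. \<tau> \<le> exc_start w \<longrightarrow> exc_path w \<tau> = exc_path w (exc_start w))"

definition Excursions :: "excursion set" where
  "Excursions = {w. is_excursion w}"

definition Theta :: "excursion \<Rightarrow> real \<Rightarrow> excursion \<Rightarrow> excursion" where
  "Theta w \<tau> v = (\<tau> + exc_start v, ereal \<tau> + exc_end v,
                   (\<lambda>r. exc_path w \<tau> + exc_path v (r - \<tau>)))"

text \<open>F(w) = exp(-eta s(w)) (1 - exp(-eta |l(w)|)), with |l(w)| = e(w) - s(w)
  (so that the second factor is 1 when e(w) = +infinity).\<close>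
definition F_fun :: "real \<Rightarrow> excursion \<Rightarrow> real" where
  "F_fun \<eta> w = exp (- \<eta> * exc_start w) *
     (1 - (if exc_end w = \<infinity> then 0
           else exp (- \<eta> * (real_of_ereal (exc_end w) - exc_start w))))"

text \<open>Integral of a nonnegative function f against the Brownian fan kernel
  Q(w, .) = (a/2) int_{s(w)}^{e(w)} (Theta_{w,tau})_* Q dtau, i.e.
  int f(v') Q(w,dv') = (a/2) int_{s(w)}^{e(w)} int f(Theta_{w,tau} v) Q(dv) dtau.\<close>
definition fan_integral ::
  "real \<Rightarrow> excursion measure \<Rightarrow> excursion \<Rightarrow> (excursion \<Rightarrow> ennreal) \<Rightarrow> ennreal" where
  "fan_integral a Q w f =
     ennreal (a / 2) *
     (\<integral>\<^sup>+ \<tau>. indicator {\<tau>. ereal (exc_start w) \<le> ereal \<tau> \<and> ereal \<tau> \<le> exc_end w} \<tau> *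
               (\<integral>\<^sup>+ v. f (Theta w \<tau> v) \<partial>Q) \<partial>lborel)"

text \<open>Abstract description of Ito's Brownian excursion measure used here:
  a measure on excursions with start time 0, starting at 0, finite lifetime,
  whose lifetime has density s^(-3/2)/sqrt(2 pi) on (0,infinity).\<close>
definition ito_lifetime_law :: "excursion measure \<Rightarrow> bool" where
  "ito_lifetime_law Q \<longleftrightarrow>
     space Q \<subseteq> {v \<in> Excursions. exc_start v = 0 \<and> exc_path v 0 = 0 \<and> exc_end v \<noteq> \<infinity>} \<and>
     (\<lambda>v. real_of_ereal (exc_end v)) \<in> borel_measurable Q \<and>
     distr Q lborel (\<lambda>v. real_of_ereal (exc_end v)) =
       density lborel (\<lambda>x. if 0 < x then ennreal (x powr (-3/2) / sqrt (2 * pi)) else 0)"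

end

theory Submission
  imports Defs
begin


lemma pt_bound:
  fixes \<eta> x :: real assumes "\<eta> > 0"
  shows "(if 0<x then ennreal(x powr(-3/2)/sqrt(2*pi)) else 0) * ennreal(1 - exp(-\<eta>*x))
    \<le> ennreal(\<eta> * x powr(-1/2)) * indicator {0..1/\<eta>} x + ennreal(x powr(-3/2)) * indicator {1/\<eta>..} x"
proof (cases "0 < x")
  case False then show ?thesis by simp
next
  case True
  have sq: "1 \<le> sqrt(2*pi)" using pi_gt3 by (simp add: real_le_rsqrt)
  have p0: "0 \<le> x powr(-3/2)" by simp
  have e1: "1 - exp(-\<eta>*x) \<le> \<eta>*x" using exp_ge_add_one_self[of "-\<eta>*x"] by simp
  have e2: "0 \<le> 1 - exp(-\<eta>*x)" using True assms by simp
  have e3: "1 - exp(-\<eta>*x) \<le> 1" by simp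
  have d: "x powr(-3/2)/sqrt(2*pi) \<le> x powr(-3/2)"
  proof -
    have "x powr(-3/2)/sqrt(2*pi) \<le> x powr(-3/2)/1"
      by (rule divide_left_mono[OF sq p0]) (use sq in simp)
    thus ?thesis by simp
  qed
  have d0: "0 \<le> x powr(-3/2)/sqrt(2*pi)" by simp
  have L: "(if 0<x then ennreal(x powr(-3/2)/sqrt(2*pi)) else 0) * ennreal(1 - exp(-\<eta>*x))
      = ennreal (x powr(-3/2)/sqrt(2*pi) * (1 - exp(-\<eta>*x)))"
  proof -
    have "ennreal (x powr(-3/2)/sqrt(2*pi) * (1 - exp(-\<eta>*x))) = ennreal (x powr(-3/2)/sqrt(2*pi)) * ennreal (1 - exp(-\<eta>*x))"
      by (rule ennreal_mult[OF d0 e2])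
    thus ?thesis using True by simp
  qed
  show ?thesis
  proof (cases "x \<le> 1/\<eta>")
    case True2: True
    have pw: "x powr(-3/2) * x = x powr (-1/2)"
    proof -
      have "x powr(-3/2) * x powr 1 = x powr(-3/2 + 1)" by (rule powr_add[symmetric])
      moreover have "x powr 1 = x" using True by simp
      moreover have "(-3/2 + 1::real) = -1/2" by simp
      ultimately show ?thesis by simp
    qed
    have "x powr(-3/2)/sqrt(2*pi) * (1 - exp(-\<eta>*x)) \<le> x powr(-3/2) * (\<eta>*x)"
      by (rule mult_mono[OF d e1 p0 e2])
    also have "\<dots> = \<eta> * x powr (-1/2)" using pw by (simp add: algebra_simps)
    finally have "ennreal (x powr(-3/2)/sqrt(2*pi) * (1 - exp(-\<eta>*x))) \<le> ennreal (\<eta> * x powr (-1/2))"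
      by (rule ennreal_leI)
    also have "\<dots> \<le> ennreal(\<eta> * x powr(-1/2)) * indicator {0..1/\<eta>} x + ennreal(x powr(-3/2)) * indicator {1/\<eta>..} x"
      using True True2 by (simp add: indicator_def)
    finally have X: "ennreal (x powr(-3/2)/sqrt(2*pi) * (1 - exp(-\<eta>*x))) \<le> ennreal(\<eta> * x powr(-1/2)) * indicator {0..1/\<eta>} x + ennreal(x powr(-3/2)) * indicator {1/\<eta>..} x" .
    show ?thesis by (subst L) (rule X)
  next
    case False2: False
    have "x powr(-3/2)/sqrt(2*pi) * (1 - exp(-\<eta>*x)) \<le> x powr(-3/2) * 1"
      by (rule mult_mono[OF d e3 p0 e2])
    then have "ennreal (x powr(-3/2)/sqrt(2*pi) * (1 - exp(-\<eta>*x))) \<le> ennreal (x powr (-3/2))"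
      by (intro ennreal_leI) simp
    also have "\<dots> \<le> ennreal(\<eta> * x powr(-1/2)) * indicator {0..1/\<eta>} x + ennreal(x powr(-3/2)) * indicator {1/\<eta>..} x"
      using False2 by (simp add: indicator_def)
    finally have X: "ennreal (x powr(-3/2)/sqrt(2*pi) * (1 - exp(-\<eta>*x))) \<le> ennreal(\<eta> * x powr(-1/2)) * indicator {0..1/\<eta>} x + ennreal(x powr(-3/2)) * indicator {1/\<eta>..} x" .
    show ?thesis by (subst L) (rule X)
  qed
qed

lemma J_bound:
  fixes \<eta> :: real assumes "\<eta> > 0"
  shows "(\<integral>\<^sup>+x. (if 0<x then ennreal(x powr(-3/2)/sqrt(2*pi)) else 0) * ennreal(1 - exp(-\<eta>*x)) \<partial>lborel)
     \<le> ennreal (4 * sqrt \<eta>)"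
proof -
  define b where "b = 1/\<eta>"
  have b0: "b > 0" using assms by (simp add: b_def)
  have h1: "((\<lambda>x. \<eta> * x powr (-1/2)) has_integral \<eta> * (b powr (-1/2+1)/(-1/2+1))) {0..b}"
    by (rule has_integral_mult_right, rule has_integral_powr_from_0) (use b0 in auto)
  have h2: "((\<lambda>x. x powr (-3/2)) has_integral -(b powr (-3/2+1))/(-3/2+1)) {b..}"
    by (rule has_integral_powr_to_inf) (use b0 in auto)
  have i1: "(\<integral>\<^sup>+x. ennreal(\<eta> * x powr(-1/2)) * indicator {0..b} x \<partial>lborel) = ennreal (\<eta> * (b powr (-1/2+1)/(-1/2+1)))"
    by (rule nn_integral_has_integral_lebesgue'[OF _ h1]) (use assms in auto)
  have i2: "(\<integral>\<^sup>+x. ennreal(x powr(-3/2)) * indicator {b..} x \<partial>lborel) = ennreal (-(b powr (-3/2+1))/(-3/2+1))"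
    by (rule nn_integral_has_integral_lebesgue'[OF _ h2]) auto
  have "(\<integral>\<^sup>+x. (if 0<x then ennreal(x powr(-3/2)/sqrt(2*pi)) else 0) * ennreal(1 - exp(-\<eta>*x)) \<partial>lborel)
     \<le> (\<integral>\<^sup>+x. ennreal(\<eta> * x powr(-1/2)) * indicator {0..b} x + ennreal(x powr(-3/2)) * indicator {b..} x \<partial>lborel)"
    unfolding b_def by (rule nn_integral_mono, rule pt_bound[OF assms])
  also have "\<dots> = (\<integral>\<^sup>+x. ennreal(\<eta> * x powr(-1/2)) * indicator {0..b} x \<partial>lborel) + (\<integral>\<^sup>+x. ennreal(x powr(-3/2)) * indicator {b..} x \<partial>lborel)"
    by (rule nn_integral_add) auto
  also have "\<dots> = ennreal (\<eta> * (b powr (-1/2+1)/(-1/2+1))) + ennreal (-(b powr (-3/2+1))/(-3/2+1))"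
    using i1 i2 by simp
  also have "\<dots> = ennreal (\<eta> * (b powr (-1/2+1)/(-1/2+1)) + (-(b powr (-3/2+1))/(-3/2+1)))"
    using b0 assms by (intro ennreal_plus[symmetric]) auto
  also have "\<eta> * (b powr (-1/2+1)/(-1/2+1)) + (-(b powr (-3/2+1))/(-3/2+1)) = 4 * sqrt \<eta>"
  proof -
    have a1: "b powr (1/2) = 1 / sqrt \<eta>" using b0 assms
      by (simp add: b_def powr_half_sqrt real_sqrt_divide)
    have a2: "b powr (-1/2) = sqrt \<eta>" using b0 assms
      by (simp add: b_def powr_minus_divide powr_half_sqrt real_sqrt_divide powr_divide)
    have a3: "\<eta> / sqrt \<eta> = sqrt \<eta>" using assms
      by (metis real_div_sqrt less_imp_le)
    have n1: "-1/2+1 = (1/2::real)" by simp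
    have n2: "-3/2+1 = (-1/2::real)" by simp
    have m1: "\<eta> * ((1 / sqrt \<eta>)/(1/2)) = 2*(\<eta>/sqrt \<eta>)" by simp
    have m2: "-(sqrt \<eta>)/(-1/2) = 2 * sqrt \<eta>" by simp
    show ?thesis unfolding n1 n2 a1 a2 m1 m2 a3 by simp
  qed
  finally show ?thesis .
qed


lemma outer_eq:
  fixes \<eta> :: real assumes "\<eta> > 0" and w: "w \<in> Excursions"
  shows "(\<integral>\<^sup>+\<tau>. ennreal (exp(-\<eta>*\<tau>)) * indicator {\<tau>. ereal (exc_start w) \<le> ereal \<tau> \<and> ereal \<tau> \<le> exc_end w} \<tau> \<partial>lborel)
           = ennreal (F_fun \<eta> w / \<eta>)
       \<and> (\<lambda>\<tau>. ennreal (exp(-\<eta>*\<tau>)) * indicator {\<tau>. ereal (exc_start w) \<le> ereal \<tau> \<and> ereal \<tau> \<le> exc_end w} \<tau>) \<in> borel_measurable lborel"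
proof -
  define s where "s = exc_start w"
  have lt: "ereal s < exc_end w" using w by (simp add: Excursions_def is_excursion_def s_def)
  show ?thesis
  proof (cases "exc_end w")
    case (real t)
    have st: "s < t" using lt real by simp
    have S: "{\<tau>. ereal (exc_start w) \<le> ereal \<tau> \<and> ereal \<tau> \<le> exc_end w} = {s..t}"
      using real by (auto simp: s_def)
    have hi: "((\<lambda>x. exp (-\<eta>*x)) has_integral (-exp (-\<eta>*t)/\<eta> - (-exp (-\<eta>* s)/\<eta>))) {s..t}"
      using st \<open>\<eta>>0\<close>
      by (intro fundamental_theorem_of_calculus)
         (auto intro!: derivative_eq_intros
               simp flip: has_real_derivative_iff_has_vector_derivative)
    have Fw: "F_fun \<eta> w = exp(-\<eta>* s) - exp(-\<eta>*t)"
    proof -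
      have "exp(-\<eta>* s) * exp (-\<eta>*(t - s)) = exp(-\<eta>*t)"
        by (simp add: exp_add[symmetric] algebra_simps)
      then show ?thesis using real by (simp add: F_fun_def s_def algebra_simps)
    qed
    have "(\<integral>\<^sup>+\<tau>. ennreal (exp(-\<eta>*\<tau>)) * indicator {s..t} \<tau> \<partial>lborel) = ennreal (-exp (-\<eta>*t)/\<eta> - (-exp (-\<eta>* s)/\<eta>))"
      by (rule nn_integral_has_integral_lebesgue'[OF _ hi]) auto
    also have "-exp (-\<eta>*t)/\<eta> - (-exp (-\<eta>* s)/\<eta>) = F_fun \<eta> w / \<eta>"
      unfolding Fw by (simp add: diff_divide_distrib)
    finally show ?thesis unfolding S by simp
  next
    case PInf
    have S: "{\<tau>. ereal (exc_start w) \<le> ereal \<tau> \<and> ereal \<tau> \<le> exc_end w} = {s..}"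
      using PInf by (auto simp: s_def)
    have Fw: "F_fun \<eta> w = exp(-\<eta>* s)" using PInf by (simp add: F_fun_def s_def)
    have "(\<integral>\<^sup>+\<tau>. ennreal (exp(-\<eta>*\<tau>)) * indicator {s..} \<tau> \<partial>lborel) = ennreal (exp (-\<eta>* s)/\<eta>)"
      by (rule nn_integral_has_integral_lebesgue'[OF _ has_integral_exp_minus_to_infinity]) (use \<open>\<eta>>0\<close> in auto)
    then show ?thesis unfolding S Fw by simp
  next
    case MInf
    then show ?thesis using lt by simp
  qed
qed

lemma inner_eq:
  fixes \<eta> :: real assumes "\<eta> > 0" and Q: "ito_lifetime_law Q"
  shows "(\<integral>\<^sup>+v. ennreal (F_fun \<eta> (Theta w \<tau> v)) \<partial>Q) = ennreal (exp(-\<eta>*\<tau>)) *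
     (\<integral>\<^sup>+x. (if 0<x then ennreal(x powr(-3/2)/sqrt(2*pi)) else 0) * ennreal(1 - exp(-\<eta>*x)) \<partial>lborel)"
proof -
  define L where "L = (\<lambda>v. real_of_ereal (exc_end v))"
  have sp: "space Q \<subseteq> {v \<in> Excursions. exc_start v = 0 \<and> exc_path v 0 = 0 \<and> exc_end v \<noteq> \<infinity>}"
    and Lm: "L \<in> borel_measurable Q"
    and D: "distr Q lborel L = density lborel (\<lambda>x. if 0 < x then ennreal (x powr (-3/2) / sqrt (2 * pi)) else 0)"
    using Q unfolding ito_lifetime_law_def L_def by auto
  have Lm': "L \<in> measurable Q lborel" using Lm by simp
  have pt: "ennreal (F_fun \<eta> (Theta w \<tau> v)) = ennreal (exp(-\<eta>*\<tau>)) * ennreal (1 - exp(-\<eta> * L v))"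
    if v: "v \<in> space Q" for v
  proof -
    have v1: "exc_start v = 0" "exc_end v \<noteq> \<infinity>" "v \<in> Excursions" using sp v by auto
    then have "ereal 0 < exc_end v" by (simp add: Excursions_def is_excursion_def)
    with v1 obtain r where r: "exc_end v = ereal r" "r > 0" by (cases "exc_end v") auto
    have "F_fun \<eta> (Theta w \<tau> v) = exp(-\<eta>*\<tau>) * (1 - exp(-\<eta> * L v))"
      using r v1 by (simp add: F_fun_def Theta_def exc_start_def exc_end_def L_def)
    moreover have "0 \<le> 1 - exp(-\<eta> * L v)" using r \<open>\<eta>>0\<close> by (simp add: L_def)
    ultimately show ?thesis by (simp add: ennreal_mult)
  qed
  have gm: "(\<lambda>x::real. ennreal (1 - exp(-\<eta>*x))) \<in> borel_measurable lborel" by measurable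
  have "(\<integral>\<^sup>+v. ennreal (F_fun \<eta> (Theta w \<tau> v)) \<partial>Q) = (\<integral>\<^sup>+v. ennreal (exp(-\<eta>*\<tau>)) * ennreal (1 - exp(-\<eta> * L v)) \<partial>Q)"
    by (rule nn_integral_cong) (simp add: pt)
  also have "\<dots> = ennreal (exp(-\<eta>*\<tau>)) * (\<integral>\<^sup>+v. ennreal (1 - exp(-\<eta> * L v)) \<partial>Q)"
    by (rule nn_integral_cmult) (rule measurable_compose[OF Lm' gm])
  also have "(\<integral>\<^sup>+v. ennreal (1 - exp(-\<eta> * L v)) \<partial>Q) = (\<integral>\<^sup>+x. ennreal (1 - exp(-\<eta> * x)) \<partial>distr Q lborel L)"
    by (rule nn_integral_distr[symmetric]) (use Lm' gm in auto)
  also have "\<dots> = (\<integral>\<^sup>+x. (if 0<x then ennreal(x powr(-3/2)/sqrt(2*pi)) else 0) * ennreal(1 - exp(-\<eta>*x)) \<partial>lborel)"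
    unfolding D by (rule nn_integral_density) measurable
  finally show ?thesis .
qed


theorem proposition2p13:
  fixes a :: real and Q :: "excursion measure"
  assumes "a > 0"
    and "ito_lifetime_law Q"
  shows "\<exists>\<eta>0. \<forall>\<eta>\<ge>\<eta>0. \<eta> > 0 \<longrightarrow>
           (\<exists>c. 0 \<le> c \<and> c < 1 \<and>
              (\<forall>w\<in>Excursions.
                 fan_integral a Q w (\<lambda>v. ennreal (F_fun \<eta> v)) \<le> ennreal (c * F_fun \<eta> w)))"
proof (rule exI[of _ "4*a^2+1"], intro allI impI)
  fix \<eta> :: real assume h: "\<eta> \<ge> 4*a^2+1" and e0: "\<eta> > 0"
  define c where "c = 2*a / sqrt \<eta>"
  define J where "J = (\<integral>\<^sup>+x. (if 0<x then ennreal(x powr(-3/2)/sqrt(2*pi)) else 0) * ennreal(1 - exp(-\<eta>*x)) \<partial>lborel)"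
  have Jb: "J \<le> ennreal (4 * sqrt \<eta>)" unfolding J_def by (rule J_bound[OF e0])
  have sq: "2*a < sqrt \<eta>" using h \<open>a>0\<close> by (intro real_less_rsqrt) (simp add: power_mult_distrib)
  have c1: "c < 1" using sq e0 by (simp add: c_def)
  have c0: "0 \<le> c" using \<open>a>0\<close> e0 by (simp add: c_def)
  show "\<exists>c. 0 \<le> c \<and> c < 1 \<and> (\<forall>w\<in>Excursions.
                 fan_integral a Q w (\<lambda>v. ennreal (F_fun \<eta> v)) \<le> ennreal (c * F_fun \<eta> w))"
  proof (rule exI[of _ c], rule conjI[OF c0], rule conjI[OF c1], rule ballI)
    fix w assume w: "w \<in> Excursions"
    define S where "S = {\<tau>. ereal (exc_start w) \<le> ereal \<tau> \<and> ereal \<tau> \<le> exc_end w}"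
    have O: "(\<integral>\<^sup>+\<tau>. ennreal (exp(-\<eta>*\<tau>)) * indicator S \<tau> \<partial>lborel) = ennreal (F_fun \<eta> w / \<eta>)"
      and M: "(\<lambda>\<tau>. ennreal (exp(-\<eta>*\<tau>)) * indicator S \<tau>) \<in> borel_measurable lborel"
      using outer_eq[OF e0 w] unfolding S_def by blast+
    have F0': "0 \<le> F_fun \<eta> w"
    proof -
      have lt: "ereal (exc_start w) < exc_end w" using w by (simp add: Excursions_def is_excursion_def)
      have "0 \<le> 1 - (if exc_end w = \<infinity> then 0 else exp (- \<eta> * (real_of_ereal (exc_end w) - exc_start w)))"
        using lt e0 by (cases "exc_end w") (auto simp: mult_nonneg_nonneg)
      thus ?thesis unfolding F_fun_def by simp
    qed
    have F0: "0 \<le> F_fun \<eta> w / \<eta>" using F0' e0 by simp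
    have "fan_integral a Q w (\<lambda>v. ennreal (F_fun \<eta> v))
        = ennreal (a/2) * (\<integral>\<^sup>+\<tau>. indicator S \<tau> * (ennreal (exp(-\<eta>*\<tau>)) * J) \<partial>lborel)"
      unfolding fan_integral_def S_def J_def by (simp only: inner_eq[OF e0 assms(2)])
    also have "(\<integral>\<^sup>+\<tau>. indicator S \<tau> * (ennreal (exp(-\<eta>*\<tau>)) * J) \<partial>lborel)
        = (\<integral>\<^sup>+\<tau>. (ennreal (exp(-\<eta>*\<tau>)) * indicator S \<tau>) * J \<partial>lborel)"
      by (simp only: mult.commute mult.left_commute mult.assoc)
    also have "\<dots> = ennreal (F_fun \<eta> w / \<eta>) * J"
      by (subst nn_integral_multc[OF M], subst O, rule refl)
    also have "ennreal (a/2) * (ennreal (F_fun \<eta> w / \<eta>) * J)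
        \<le> ennreal (a/2) * (ennreal (F_fun \<eta> w / \<eta>) * ennreal (4 * sqrt \<eta>))"
      by (intro mult_left_mono Jb) auto
    also have "\<dots> = ennreal (a/2 * (F_fun \<eta> w / \<eta> * (4 * sqrt \<eta>)))"
    proof -
      have q1: "ennreal (F_fun \<eta> w / \<eta>) * ennreal (4 * sqrt \<eta>) = ennreal (F_fun \<eta> w / \<eta> * (4 * sqrt \<eta>))"
        by (rule ennreal_mult[symmetric]) (use F0 e0 in auto)
      have q2: "ennreal (a/2) * ennreal (F_fun \<eta> w / \<eta> * (4 * sqrt \<eta>)) = ennreal (a/2 * (F_fun \<eta> w / \<eta> * (4 * sqrt \<eta>)))"
        by (rule ennreal_mult[symmetric]) (use F0' F0 e0 \<open>a>0\<close> in auto)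
      show ?thesis by (simp only: q1 q2)
    qed
    also have "a/2 * (F_fun \<eta> w / \<eta> * (4 * sqrt \<eta>)) = c * F_fun \<eta> w"
    proof -
      define q where "q = sqrt \<eta>"
      define f where "f = F_fun \<eta> w"
      have q0: "q > 0" using e0 by (simp add: q_def)
      have qq: "\<eta> = q*q" using e0 by (simp add: q_def)
      have "a/2 * (f / (q*q) * (4 * q)) = 2*a/q * f" using q0 by (simp add: field_simps)
      thus ?thesis unfolding c_def f_def q_def[symmetric] by (simp only: qq)
    qed
    finally show "fan_integral a Q w (\<lambda>v. ennreal (F_fun \<eta> v)) \<le> ennreal (c * F_fun \<eta> w)" .
  qed
qed



end
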